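(* Let $T$ be a light tournament, $z\in V(T)$, and $i\ge 3$. Suppose there are vertices $z_{i-1},z'_{i-1}\in V_{i-1}(z)$ (possibly equal) such that every $s\in V_i(z)$ has an arc $(s,z_{i-1})$ or $(s,z'_{i-1})$ in $T$. Then $U:=N(z_{i-1})\cap V_i(z)$ and $S:=V_i(z)\setminus U$ both induce triangle-free (hence acyclic) subtournaments of $T$.
   Context: A triangle of a tournament is a set of three vertices inducing a directed 3-cycle. An unordered pair $ab$ of vertices is a diagonal if there exist vertices $u,v$ with $\{u,v,a\}$ and $\{u,v,b\}$ both triangles. A triangle is heavy if at least two of its pairs are diagonals; a tournament is light if it has no heavy triangle. For $S\subseteq V(T)$, the in-neighborhood is $N(S)=\{v\notin S: (v,u)\in A(T)\text{ for some }u\in S\}$, and $N(u)=N(\{u\})$. For $z\in V(T)$: $V_1(z)=\{z\}$ and $V_{j+1}(z)=N\big(\bigcup_{k\le j}V_k(z)\big)$ for $j\ge1$; thus $V_j(z)$ is the set of vertices whose shortest directed path to $z$ has length exactly $j-1$. *)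

theory Defs
  imports Main
begin

text \<open>A (finite) tournament on vertex set V with arc relation A (A u v means arc (u,v)).\<close>
definition tournament :: "'a set \<Rightarrow> ('a \<Rightarrow> 'a \<Rightarrow> bool) \<Rightarrow> bool" where
  "tournament V A \<longleftrightarrow> finite V \<and>
     (\<forall>u\<in>V. \<forall>v\<in>V. A u v \<longrightarrow> u \<noteq> v) \<and>
     (\<forall>u\<in>V. \<forall>v\<in>V. u \<noteq> v \<longrightarrow> (A u v \<longleftrightarrow> \<not> A v u))"

definition is_triangle :: "'a set \<Rightarrow> ('a \<Rightarrow> 'a \<Rightarrow> bool) \<Rightarrow> 'a \<Rightarrow> 'a \<Rightarrow> 'a \<Rightarrow> bool" where
  "is_triangle V A a b c \<longleftrightarrow> a \<in> V \<and> b \<in> V \<and> c \<in> V \<and>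
     a \<noteq> b \<and> b \<noteq> c \<and> a \<noteq> c \<and>
     ((A a b \<and> A b c \<and> A c a) \<or> (A b a \<and> A c b \<and> A a c))"

definition diagonal :: "'a set \<Rightarrow> ('a \<Rightarrow> 'a \<Rightarrow> bool) \<Rightarrow> 'a \<Rightarrow> 'a \<Rightarrow> bool" where
  "diagonal V A a b \<longleftrightarrow> a \<in> V \<and> b \<in> V \<and> a \<noteq> b \<and>
     (\<exists>u\<in>V. \<exists>v\<in>V. is_triangle V A u v a \<and> is_triangle V A u v b)"

definition heavy :: "'a set \<Rightarrow> ('a \<Rightarrow> 'a \<Rightarrow> bool) \<Rightarrow> 'a \<Rightarrow> 'a \<Rightarrow> 'a \<Rightarrow> bool" where
  "heavy V A a b c \<longleftrightarrow> is_triangle V A a b c \<and>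
     ((diagonal V A a b \<and> diagonal V A b c) \<or> (diagonal V A a b \<and> diagonal V A a c)
      \<or> (diagonal V A b c \<and> diagonal V A a c))"

definition light :: "'a set \<Rightarrow> ('a \<Rightarrow> 'a \<Rightarrow> bool) \<Rightarrow> bool" where
  "light V A \<longleftrightarrow> tournament V A \<and> \<not> (\<exists>a b c. heavy V A a b c)"

definition innbhd :: "'a set \<Rightarrow> ('a \<Rightarrow> 'a \<Rightarrow> bool) \<Rightarrow> 'a set \<Rightarrow> 'a set" where
  "innbhd V A S = {v \<in> V. v \<notin> S \<and> (\<exists>u\<in>S. A v u)}"

fun cumV :: "'a set \<Rightarrow> ('a \<Rightarrow> 'a \<Rightarrow> bool) \<Rightarrow> 'a \<Rightarrow> nat \<Rightarrow> 'a set" where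
  "cumV V A z 0 = {}"
| "cumV V A z (Suc 0) = {z}"
| "cumV V A z (Suc (Suc j)) = cumV V A z (Suc j) \<union> innbhd V A (cumV V A z (Suc j))"

text \<open>V_j(z): V_1(z) = {z}, V_{j+1}(z) = N(V_1(z) \<union> ... \<union> V_j(z)); V_0 is empty (unused).\<close>
fun Vlev :: "'a set \<Rightarrow> ('a \<Rightarrow> 'a \<Rightarrow> bool) \<Rightarrow> 'a \<Rightarrow> nat \<Rightarrow> 'a set" where
  "Vlev V A z 0 = {}"
| "Vlev V A z (Suc 0) = {z}"
| "Vlev V A z (Suc (Suc j)) = innbhd V A (cumV V A z (Suc j))"

definition triangle_free_on :: "'a set \<Rightarrow> ('a \<Rightarrow> 'a \<Rightarrow> bool) \<Rightarrow> 'a set \<Rightarrow> bool" where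
  "triangle_free_on V A X \<longleftrightarrow>
     \<not> (\<exists>a\<in>X. \<exists>b\<in>X. \<exists>c\<in>X. is_triangle V A a b c)"

end

theory Submission
  imports Defs
begin

lemma cumV_sub: "z \<in> V \<Longrightarrow> cumV V A z n \<subseteq> V"
  by (induction V A z n rule: cumV.induct) (auto simp: innbhd_def)

lemma Vlev_sub: "z \<in> V \<Longrightarrow> Vlev V A z n \<subseteq> V"
  by (cases "(V, A, z, n)" rule: Vlev.cases) (auto simp: innbhd_def)

lemma key:
  assumes "z \<in> V" "i \<ge> 3" "x \<in> Vlev V A z (i - 1)"
  shows "\<exists>w\<in>V. A x w \<and> (\<forall>s\<in>Vlev V A z i. w \<noteq> s \<and> \<not> A s w)"
proof -
  have "i = Suc (Suc (Suc (i - 3)))" using assms(2) by arith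
  then obtain k where k: "i = Suc (Suc (Suc k))" by blast
  have x: "x \<in> innbhd V A (cumV V A z (Suc k))" using assms(3) k by simp
  then obtain w where w: "w \<in> cumV V A z (Suc k)" "A x w" by (auto simp: innbhd_def)
  have wV: "w \<in> V" using w(1) cumV_sub[OF assms(1)] by blast
  have "\<forall>s\<in>Vlev V A z i. w \<noteq> s \<and> \<not> A s w"
  proof
    fix s assume "s \<in> Vlev V A z i"
    hence s: "s \<in> innbhd V A (cumV V A z (Suc (Suc k)))" using k by simp
    hence "s \<notin> cumV V A z (Suc k) \<union> innbhd V A (cumV V A z (Suc k))"
      by (auto simp: innbhd_def)
    thus "w \<noteq> s \<and> \<not> A s w" using w s by (auto simp: innbhd_def)
  qed
  thus ?thesis using wV w by blast
qed

lemma tf: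
  assumes L: "light V A" and "z \<in> V" "i \<ge> 3" "x \<in> Vlev V A z (i - 1)"
    and X: "X \<subseteq> Vlev V A z i" and xX: "\<forall>s\<in>X. A s x"
  shows "triangle_free_on V A X"
proof -
  have T: "tournament V A" using L by (simp add: light_def)
  obtain w where w: "w \<in> V" "A x w" "\<forall>s\<in>Vlev V A z i. w \<noteq> s \<and> \<not> A s w"
    using key[OF assms(2-4)] by blast
  have xV: "x \<in> V" using assms(4) Vlev_sub[OF assms(2)] by blast
  have XV: "X \<subseteq> V" using X Vlev_sub[OF assms(2)] by blast
  have tri: "is_triangle V A x w s" if "s \<in> X" for s
  proof -
    have sV: "s \<in> V" using that XV by blast
    have "A w s" using w that X T sV unfolding tournament_def by blast
    moreover have "x \<noteq> w" using T w xV unfolding tournament_def by blast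
    moreover have "s \<noteq> x" using T xX that sV xV unfolding tournament_def by blast
    moreover have "w \<noteq> s" using w that X by blast
    ultimately show ?thesis using xX that sV xV w unfolding is_triangle_def by blast
  qed
  have diag: "diagonal V A a b" if "a \<in> X" "b \<in> X" "a \<noteq> b" for a b
    unfolding diagonal_def using tri that XV xV w(1) by blast
  show ?thesis unfolding triangle_free_on_def
  proof
    assume "\<exists>a\<in>X. \<exists>b\<in>X. \<exists>c\<in>X. is_triangle V A a b c"
    then obtain a b c where abc: "a\<in>X" "b\<in>X" "c\<in>X" "is_triangle V A a b c" by blast
    hence "heavy V A a b c" unfolding heavy_def using diag
      by (simp add: is_triangle_def)
    thus False using L by (auto simp: light_def)
  qed
qed

theorem lemma4:
  fixes V :: "'a set" and A :: "'a \<Rightarrow> 'a \<Rightarrow> bool" and z y y' :: 'a and i :: nat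
  assumes "light V A"
    and "z \<in> V"
    and "i \<ge> 3"
    and "y \<in> Vlev V A z (i - 1)" and "y' \<in> Vlev V A z (i - 1)"
    and "\<forall>s\<in>Vlev V A z i. A s y \<or> A s y'"
  shows "triangle_free_on V A (innbhd V A {y} \<inter> Vlev V A z i)
       \<and> triangle_free_on V A (Vlev V A z i - (innbhd V A {y} \<inter> Vlev V A z i))"
proof
  show "triangle_free_on V A (innbhd V A {y} \<inter> Vlev V A z i)"
    by (rule tf[OF assms(1-4)]) (auto simp: innbhd_def)
  have XV: "Vlev V A z i \<subseteq> V" using Vlev_sub[OF assms(2)] by blast
  show "triangle_free_on V A (Vlev V A z i - (innbhd V A {y} \<inter> Vlev V A z i))"
    by (rule tf[OF assms(1-3,5)]) (use assms(6) XV assms(1) in \<open>auto simp: innbhd_def light_def tournament_def\<close>)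
qed

end
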